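(* Let $n\ge 2$, let $H(t)$, $0\le t\le T$, be a piecewise-continuous U(1)-invariant Hamiltonian on $n$ qubits, and let $1\le k\le n$, let $i_1,\dots,i_k$ be $k$ distinct qubits and $a(t)$ a real piecewise-continuous function. Let $\Delta_3$ and $\Delta_3'$ denote the phases of the unitaries generated by $H(t)$ and by $H'(t)=H(t)+a(t)\,Z_{i_1}Z_{i_2}\cdots Z_{i_k}$, respectively. Then $\Delta_3'=\Delta_3\pmod{2\pi}$ if $k$ is even, and $$\Delta_3'=\Delta_3-4(k-1)\int_0^T a(t)\,dt \pmod{2\pi}$$ if $k$ is odd.
   Context: Qubits $1,\dots,n$, Hilbert space $(\mathbb{C}^2)^{\otimes n}$, $Z_j$ the Pauli $Z$ on qubit $j$. For $m=0,\dots,n$, $\Pi_m$ is the projector onto the span of computational basis states with exactly $m$ qubits in state $|1\rangle$. A Hamiltonian is U(1)-invariant if it commutes with $\sum_j Z_j$ (note $Z_{i_1}\cdots Z_{i_k}$ is U(1)-invariant). For a U(1)-invariant $H(t)$, $V=\mathcal{T}\exp(-i\int_0^T H(t)dt)$ (time-ordered exponential) satisfies $V=\bigoplus_{m=0}^n V_m$ with $V_m$ the restriction of $V$ to the range of $\Pi_m$; define $\theta_m=\arg\det(V_m)\in(-\pi,\pi]$ and $\Delta_3=\theta_{n-1}-\theta_1-(n-2)(\theta_n-\theta_0)\pmod{2\pi}$. *)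

theory Defs
  imports "HOL-Analysis.Analysis"
begin

text \<open>Computational basis states of n qubits (labelled 1..n) are identified with the
  set of qubits that are in state |1>. Operators are complex matrices indexed by
  basis states (only entries with both indices in qbasis n are relevant).\<close>

definition qbasis :: "nat \<Rightarrow> nat set set" where
  "qbasis n = Pow {1..n}"

type_synonym qop = "nat set \<Rightarrow> nat set \<Rightarrow> complex"

definition mmul :: "nat \<Rightarrow> qop \<Rightarrow> qop \<Rightarrow> qop" where
  "mmul n A B = (\<lambda>S R. \<Sum>K\<in>qbasis n. A S K * B K R)"

definition idop :: qop where
  "idop = (\<lambda>S R. if S = R then 1 else 0)"

definition Zop :: "nat \<Rightarrow> qop" where
  "Zop j = (\<lambda>S R. if S = R then (if j \<in> S then -1 else 1) else 0)"

fun Zprod :: "nat \<Rightarrow> nat list \<Rightarrow> qop" where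
  "Zprod n [] = idop"
| "Zprod n (i # is) = mmul n (Zop i) (Zprod n is)"

definition Ztot :: "nat \<Rightarrow> qop" where
  "Ztot n = (\<lambda>S R. \<Sum>j\<in>{1..n}. Zop j S R)"

definition hermitian_op :: "nat \<Rightarrow> qop \<Rightarrow> bool" where
  "hermitian_op n A \<longleftrightarrow> (\<forall>S\<in>qbasis n. \<forall>R\<in>qbasis n. A S R = cnj (A R S))"

definition U1_invariant :: "nat \<Rightarrow> qop \<Rightarrow> bool" where
  "U1_invariant n A \<longleftrightarrow>
     (\<forall>S\<in>qbasis n. \<forall>R\<in>qbasis n. mmul n A (Ztot n) S R = mmul n (Ztot n) A S R)"

definition pw_continuous_on :: "real \<Rightarrow> real \<Rightarrow> (real \<Rightarrow> 'b::topological_space) \<Rightarrow> bool" where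
  "pw_continuous_on a b f \<longleftrightarrow>
     (\<exists>D. finite D \<and> continuous_on ({a..b} - D) f \<and>
        (\<forall>d\<in>D. (a < d \<longrightarrow> (\<exists>l. (f \<longlongrightarrow> l) (at_left d))) \<and>
                 (d < b \<longrightarrow> (\<exists>l. (f \<longlongrightarrow> l) (at_right d)))))"

definition pw_continuous_ham :: "nat \<Rightarrow> real \<Rightarrow> (real \<Rightarrow> qop) \<Rightarrow> bool" where
  "pw_continuous_ham n T H \<longleftrightarrow>
     (\<forall>S\<in>qbasis n. \<forall>R\<in>qbasis n. pw_continuous_on 0 T (\<lambda>t. H t S R))"

text \<open>V solves the Schroedinger equation dV/dt = -i H(t) V(t), V(0) = 1, in integral form
  on [0,T]; V T is then the time-ordered exponential T exp(-i int_0^T H(t) dt).\<close>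
definition propagator :: "nat \<Rightarrow> real \<Rightarrow> (real \<Rightarrow> qop) \<Rightarrow> (real \<Rightarrow> qop) \<Rightarrow> bool" where
  "propagator n T H V \<longleftrightarrow>
     (\<forall>t\<in>{0..T}. \<forall>S\<in>qbasis n. \<forall>R\<in>qbasis n.
        ((\<lambda>s. - \<i> * mmul n (H s) (V s) S R) has_integral (V t S R - idop S R)) {0..t})"

definition det_on :: "nat set set \<Rightarrow> qop \<Rightarrow> complex" where
  "det_on B A = (\<Sum>p | p permutes B. of_int (sign p) * (\<Prod>S\<in>B. A S (p S)))"

definition theta :: "nat \<Rightarrow> qop \<Rightarrow> nat \<Rightarrow> real" where
  "theta n V m = Arg (det_on {S \<in> qbasis n. card S = m} V)"

definition Delta3 :: "nat \<Rightarrow> qop \<Rightarrow> real" where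
  "Delta3 n V = theta n V (n - 1) - theta n V 1 - (real n - 2) * (theta n V n - theta n V 0)"

definition cong_2pi :: "real \<Rightarrow> real \<Rightarrow> bool" where
  "cong_2pi x y \<longleftrightarrow> (\<exists>m::int. x - y = 2 * pi * of_int m)"

end

theory Submission
  imports Defs
begin


lemma pw_bounded:
  fixes f :: "real \<Rightarrow> 'b::real_normed_vector"
  assumes "pw_continuous_on a b f"
  shows "\<exists>M. \<forall>x\<in>{a..b}. norm (f x) \<le> M"
proof -
  obtain D where D: "finite D" "continuous_on ({a..b} - D) f"
    "\<And>d. d\<in>D \<Longrightarrow> (a < d \<longrightarrow> (\<exists>l. (f \<longlongrightarrow> l) (at_left d))) \<and> (d < b \<longrightarrow> (\<exists>l. (f \<longlongrightarrow> l) (at_right d)))"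
    using assms unfolding pw_continuous_on_def by blast
  define S' where "S' = {a..b} - D"
  have ev: "\<exists>M. eventually (\<lambda>y. y \<in> S' \<longrightarrow> norm (f y) \<le> M) (at x)" if x: "x \<in> {a..b}" for x
  proof (cases "x \<in> D")
    case False
    hence "(f \<longlongrightarrow> f x) (at x within S')" using D(2) x unfolding S'_def
      by (simp add: continuous_on_def)
    hence "eventually (\<lambda>y. norm (f y) < norm (f x) + 1) (at x within S')"
      using order_tendstoD(2)[OF tendsto_norm] by fastforce
    hence "eventually (\<lambda>y. y \<in> S' \<longrightarrow> norm (f y) \<le> norm (f x) + 1) (at x)"
      unfolding eventually_at_filter by (auto elim: eventually_mono)
    thus ?thesis by blast
  next
    case True
    have L: "\<exists>M. eventually (\<lambda>y. y \<in> S' \<longrightarrow> norm (f y) \<le> M) (at_left x)"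
    proof (cases "a < x")
      case True
      with D(3)[OF \<open>x\<in>D\<close>] obtain l where l: "(f \<longlongrightarrow> l) (at_left x)" by blast
      hence "eventually (\<lambda>y. norm (f y) < norm l + 1) (at_left x)"
        using order_tendstoD(2)[OF tendsto_norm[OF l]] by simp
      thus ?thesis by (intro exI[of _ "norm l + 1"]) (auto elim!: eventually_mono)
    next
      case False
      hence "x = a" using x by auto
      have "eventually (\<lambda>y. y < x) (at_left x)" by (simp add: eventually_at_filter)
      hence "eventually (\<lambda>y. y \<in> S' \<longrightarrow> norm (f y) \<le> 0) (at_left x)"
        by (rule eventually_mono) (use \<open>x = a\<close> in \<open>auto simp: S'_def\<close>)
      thus ?thesis by blast
    qed
    have R: "\<exists>M. eventually (\<lambda>y. y \<in> S' \<longrightarrow> norm (f y) \<le> M) (at_right x)"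
    proof (cases "x < b")
      case True
      with D(3)[OF \<open>x\<in>D\<close>] obtain l where l: "(f \<longlongrightarrow> l) (at_right x)" by blast
      hence "eventually (\<lambda>y. norm (f y) < norm l + 1) (at_right x)"
        using order_tendstoD(2)[OF tendsto_norm[OF l]] by simp
      thus ?thesis by (intro exI[of _ "norm l + 1"]) (auto elim!: eventually_mono)
    next
      case False
      hence "x = b" using x by auto
      have "eventually (\<lambda>y. y > x) (at_right x)" by (simp add: eventually_at_filter)
      hence "eventually (\<lambda>y. y \<in> S' \<longrightarrow> norm (f y) \<le> 0) (at_right x)"
        by (rule eventually_mono) (use \<open>x = b\<close> in \<open>auto simp: S'_def\<close>)
      thus ?thesis by blast
    qed
    from L R obtain M1 M2 where "eventually (\<lambda>y. y \<in> S' \<longrightarrow> norm (f y) \<le> M1) (at_left x)"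
      "eventually (\<lambda>y. y \<in> S' \<longrightarrow> norm (f y) \<le> M2) (at_right x)" by blast
    hence "eventually (\<lambda>y. y \<in> S' \<longrightarrow> norm (f y) \<le> max M1 M2) (at_left x)"
      "eventually (\<lambda>y. y \<in> S' \<longrightarrow> norm (f y) \<le> max M1 M2) (at_right x)"
      by (auto elim!: eventually_mono)
    hence "eventually (\<lambda>y. y \<in> S' \<longrightarrow> norm (f y) \<le> max M1 M2) (at x)"
      by (subst at_eq_sup_left_right) (simp add: eventually_sup)
    thus ?thesis by blast
  qed
  have "\<exists>d M. d > 0 \<and> (\<forall>y\<in>S'. dist y x < d \<longrightarrow> norm (f y) \<le> M)" if x: "x \<in> {a..b}" for x
  proof -
    obtain M where "eventually (\<lambda>y. y \<in> S' \<longrightarrow> norm (f y) \<le> M) (at x)" using ev[OF x] by blast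
    then obtain d where d: "d > 0" "\<And>y. y \<noteq> x \<Longrightarrow> dist y x < d \<Longrightarrow> y \<in> S' \<longrightarrow> norm (f y) \<le> M"
      unfolding eventually_at by blast
    show ?thesis
      by (rule exI[of _ d], rule exI[of _ "max M (norm (f x))"]) (use d in \<open>force\<close>)
  qed
  then obtain d M where dM: "\<And>x. x \<in> {a..b} \<Longrightarrow> d x > 0"
    "\<And>x y. x \<in> {a..b} \<Longrightarrow> y \<in> S' \<Longrightarrow> dist y x < d x \<Longrightarrow> norm (f y) \<le> M x"
    by metis
  have "{a..b} \<subseteq> (\<Union>x\<in>{a..b}. ball x (d x))" using dM(1) by force
  then obtain C where C: "C \<subseteq> {a..b}" "finite C" "{a..b} \<subseteq> (\<Union>x\<in>C. ball x (d x))"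
    using compactE_image[of "{a..b}" "{a..b}" "\<lambda>x. ball x (d x)"] by (metis compact_Icc open_ball)
  define B where "B = (\<Sum>z\<in>D. norm (f z)) + (\<Sum>x\<in>C. max 0 (M x))"
  have "norm (f y) \<le> B" if y: "y \<in> {a..b}" for y
  proof (cases "y \<in> D")
    case True
    hence "norm (f y) \<le> (\<Sum>z\<in>D. norm (f z))" using D(1) by (intro member_le_sum) auto
    moreover have "0 \<le> (\<Sum>x\<in>C. max 0 (M x))" by (intro sum_nonneg) auto
    ultimately show ?thesis unfolding B_def by linarith
  next
    case False
    then obtain x where x: "x \<in> C" "dist x y < d x" using C(3) y by auto
    hence "norm (f y) \<le> M x" using dM(2)[of x y] C(1) y False by (auto simp: S'_def dist_commute)
    also have "\<dots> \<le> (\<Sum>x\<in>C. max 0 (M x))"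
      using C(2) x(1) by (intro order.trans[OF _ member_le_sum[of x]]) auto
    finally have "norm (f y) \<le> (\<Sum>x\<in>C. max 0 (M x))" .
    moreover have "0 \<le> (\<Sum>z\<in>D. norm (f z))" by (intro sum_nonneg) auto
    ultimately show ?thesis unfolding B_def by linarith
  qed
  thus ?thesis by blast
qed

lemma pw_integrable:
  fixes f :: "real \<Rightarrow> 'b::euclidean_space"
  assumes "pw_continuous_on a b f"
  shows "f integrable_on {a..b}"
proof -
  obtain M where M: "\<And>x. x\<in>{a..b} \<Longrightarrow> norm (f x) \<le> M" using pw_bounded[OF assms] by blast
  obtain D where D: "finite D" "continuous_on ({a..b} - D) f"
    using assms unfolding pw_continuous_on_def by blast
  have Dleb: "{a..b} - D \<in> sets lebesgue" by (meson D(1) finite_imp_null_set_lborel lmeasurable_interval(1) measurable_Diff_null_set null_sets_completionI)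
  have "f \<in> borel_measurable (lebesgue_on ({a..b} - D))"
    by (rule continuous_imp_measurable_on_sets_lebesgue[OF D(2)])
       (rule Dleb)
  hence "f measurable_on ({a..b} - D)"
    by (subst measurable_on_iff_borel_measurable) (use Dleb in auto)
  hence "f measurable_on {a..b}"
    by (rule measurable_on_spike_set) (rule negligible_subset[of D], auto simp: D(1) negligible_finite)
  hence "f \<in> borel_measurable (lebesgue_on {a..b})"
    by (subst (asm) measurable_on_iff_borel_measurable) auto
  thus ?thesis
    by (rule measurable_bounded_by_integrable_imp_integrable[where g = "\<lambda>_. M"]) (auto simp: M)
qed



lemma finite_qbasis[simp]: "finite (qbasis n)" by (simp add: qbasis_def)

lemma mmul_diag_left:
  assumes "S \<in> qbasis n" "\<And>K. K \<noteq> S \<Longrightarrow> A S K = 0"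
  shows "mmul n A B S R = A S S * B S R"
proof -
  have "mmul n A B S R = (\<Sum>K\<in>qbasis n. if K = S then A S S * B S R else 0)"
    unfolding mmul_def by (rule sum.cong) (auto simp: assms(2))
  thus ?thesis using assms(1) by simp
qed

lemma mmul_diag_right:
  assumes "R \<in> qbasis n" "\<And>K. K \<noteq> R \<Longrightarrow> B K R = 0"
  shows "mmul n A B S R = A S R * B R R"
proof -
  have "mmul n A B S R = (\<Sum>K\<in>qbasis n. if K = R then A S R * B R R else 0)"
    unfolding mmul_def by (rule sum.cong) (auto simp: assms(2))
  thus ?thesis using assms(1) by simp
qed

lemma Zprod_diag:
  assumes "S \<in> qbasis n"
  shows "Zprod n qs S R = (if S = R then (\<Prod>i\<leftarrow>qs. if i \<in> S then -1 else 1) else 0)"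
proof (induction qs arbitrary: R)
  case Nil thus ?case by (simp add: idop_def)
next
  case (Cons i qs)
  have "Zprod n (i # qs) S R = Zop i S S * Zprod n qs S R"
    by simp (rule mmul_diag_left[OF assms], simp add: Zop_def)
  thus ?case using Cons by (simp add: Zop_def)
qed

lemma Zprod_diag':
  assumes "S \<in> qbasis n" "distinct qs"
  shows "Zprod n qs S S = (-1) ^ card (S \<inter> set qs)"
proof -
  have "(\<Prod>i\<leftarrow>qs. if i \<in> S then -1 else 1) = (\<Prod>i\<in>set qs. if i \<in> S then -1 else (1::complex))"
    using assms(2) by (simp add: prod.distinct_set_conv_list)
  also have "\<dots> = (\<Prod>i\<in>set qs \<inter> S. -1)"
    by (simp add: prod.If_cases Int_def)
  also have "\<dots> = (-1) ^ card (S \<inter> set qs)" by (simp add: Int_commute)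
  finally show ?thesis using Zprod_diag[OF assms(1)] by simp
qed

lemma Ztot_diag:
  assumes "S \<in> qbasis n"
  shows "Ztot n S R = (if S = R then of_nat n - 2 * of_nat (card S) else 0)"
proof (cases "S = R")
  case True
  have sub: "S \<subseteq> {1..n}" using assms by (simp add: qbasis_def)
  have "Ztot n S S = (\<Sum>j\<in>{1..n}. if j \<in> S then -1 else (1::complex))"
    unfolding Ztot_def Zop_def by simp
  also have "\<dots> = (\<Sum>j\<in>{1..n} \<inter> S. -1) + (\<Sum>j\<in>{1..n} - S. 1)"
    by (simp add: sum.If_cases Int_def Diff_eq)
  also have "\<dots> = - of_nat (card S) + of_nat (n - card S)"
    using sub by (simp add: Int_absorb1 card_Diff_subset finite_subset)
  also have "\<dots> = of_nat n - 2 * of_nat (card S)"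
    using card_mono[OF _ sub] by (simp add: of_nat_diff)
  finally show ?thesis using True by simp
qed (simp add: Ztot_def Zop_def)

lemma U1_block:
  assumes "U1_invariant n A" "S \<in> qbasis n" "R \<in> qbasis n" "card S \<noteq> card R"
  shows "A S R = 0"
proof -
  have "mmul n A (Ztot n) S R = A S R * Ztot n R R"
    by (rule mmul_diag_right[OF assms(3)]) (simp add: Ztot_def Zop_def)
  moreover have "mmul n (Ztot n) A S R = Ztot n S S * A S R"
    by (rule mmul_diag_left[OF assms(2)]) (simp add: Ztot_diag[OF assms(2)])
  ultimately show ?thesis using assms by (auto simp: U1_invariant_def Ztot_diag)
qed



lemma det_on_cong:
  assumes "\<And>S R. S \<in> B \<Longrightarrow> R \<in> B \<Longrightarrow> M S R = N S R"
  shows "det_on B M = det_on B N"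
  unfolding det_on_def
  by (intro sum.cong refl arg_cong2[where f="(*)"] prod.cong) (auto intro!: assms simp: permutes_in_image)

lemma det_on_idop:
  assumes "finite B"
  shows "det_on B idop = 1"
proof -
  have "det_on B idop = (\<Sum>p\<in>{p. p permutes B}. if p = id then 1 else 0)"
    unfolding det_on_def
  proof (intro sum.cong refl)
    fix p assume p: "p \<in> {p. p permutes B}"
    show "of_int (sign p) * (\<Prod>S\<in>B. idop S (p S)) = (if p = id then 1 else 0)"
    proof (cases "p = id")
      case False
      then obtain S where S: "p S \<noteq> S" by (metis eq_id_iff)
      hence "S \<in> B" using p by (auto simp: permutes_def)
      hence "(\<Prod>S\<in>B. idop S (p S)) = 0" using S assms by (intro prod_zero) (auto simp: idop_def)
      thus ?thesis using False by simp
    qed (simp add: idop_def)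
  qed
  also have "\<dots> = 1" using assms by (simp add: permutes_id sum.delta' finite_permutations)
  finally show ?thesis .
qed

lemma det_on_alt:
  fixes M :: qop
  assumes "finite B" "S0 \<in> B" "K \<in> B" "K \<noteq> S0"
  shows "(\<Sum>p | p permutes B. of_int (sign p) * (M K (p S0) * (\<Prod>S\<in>B - {S0}. M S (p S)))) = 0"
proof -
  define F where "F = (\<lambda>p. of_int (sign p) * (M K (p S0) * (\<Prod>S\<in>B - {S0}. M S (p S))))"
  define \<tau> where "\<tau> = Transposition.transpose S0 K"
  have tau: "\<tau> permutes B" unfolding \<tau>_def using assms by (simp add: permutes_swap_id)
  have neg: "F (p \<circ> \<tau>) = - F p" if p: "p permutes B" for p
  proof -
    have fin: "finite (B - {S0})" using assms by simp
    have K1: "K \<in> B - {S0}" using assms by auto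
    have sg: "sign (p \<circ> \<tau>) = - sign p"
      using p assms unfolding \<tau>_def
      by (simp add: sign_compose permutes_imp_permutation[OF assms(1)] permutation_swap_id sign_swap_id)
    have P1: "(\<Prod>S\<in>B - {S0}. M S ((p \<circ> \<tau>) S)) = M K (p S0) * (\<Prod>S\<in>B - {S0} - {K}. M S (p S))"
      using prod.remove[OF fin K1, of "\<lambda>S. M S ((p \<circ> \<tau>) S)"] assms
      by (simp add: \<tau>_def)
    have P2: "(\<Prod>S\<in>B - {S0}. M S (p S)) = M K (p K) * (\<Prod>S\<in>B - {S0} - {K}. M S (p S))"
      using prod.remove[OF fin K1, of "\<lambda>S. M S (p S)"] by simp
    have "(p \<circ> \<tau>) S0 = p K" by (simp add: \<tau>_def)
    thus ?thesis unfolding F_def using P1 P2 sg by (simp add: algebra_simps)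
  qed
  have "sum F {p. p permutes B} = sum (\<lambda>p. F (p \<circ> \<tau>)) {p. p permutes B}"
    by (rule sum_permutations_compose_right[OF tau])
  also have "\<dots> = - sum F {p. p permutes B}"
    by (simp add: neg sum_negf[symmetric])
  finally have "sum F {p. p permutes B} = 0" by simp
  thus ?thesis unfolding F_def by simp
qed

lemma det_on_diag_row:
  fixes M :: qop
  assumes "finite B" "S0 \<in> B"
  shows "(\<Sum>p | p permutes B. of_int (sign p) * (M S0 (p S0) * (\<Prod>S\<in>B - {S0}. M S (p S)))) = det_on B M"
  unfolding det_on_def using assms by (intro sum.cong refl) (simp add: prod.remove)

lemma det_on_deriv_identity:
  fixes M G :: qop
  assumes "finite B"
  shows "(\<Sum>p | p permutes B. of_int (sign p) *
            (\<Sum>S0\<in>B. (\<Prod>S\<in>B - {S0}. M S (p S)) * (\<Sum>K\<in>B. G S0 K * M K (p S0))))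
         = (\<Sum>S\<in>B. G S S) * det_on B M"
proof -
  have "(\<Sum>p | p permutes B. of_int (sign p) *
            (\<Sum>S0\<in>B. (\<Prod>S\<in>B - {S0}. M S (p S)) * (\<Sum>K\<in>B. G S0 K * M K (p S0))))
      = (\<Sum>S0\<in>B. \<Sum>K\<in>B. G S0 K * (\<Sum>p | p permutes B. of_int (sign p) * (M K (p S0) * (\<Prod>S\<in>B - {S0}. M S (p S)))))"
    by (simp add: sum_distrib_left sum_distrib_right algebra_simps sum.swap[of _ "{p. p permutes B}"])
  also have "\<dots> = (\<Sum>S0\<in>B. \<Sum>K\<in>B. if K = S0 then G S0 S0 * det_on B M else 0)"
    using assms det_on_alt det_on_diag_row by (intro sum.cong refl) auto
  also have "\<dots> = (\<Sum>S\<in>B. G S S) * det_on B M"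
    using assms by (simp add: sum_distrib_right)
  finally show ?thesis .
qed



lemma has_derivative_eq_rhs': "(f has_derivative f') F \<Longrightarrow> f' = g' \<Longrightarrow> (f has_derivative g') F"
  by simp

lemma liouville:
  fixes M G :: "real \<Rightarrow> qop" and B :: "nat set set" and T :: real and E :: "real set"
  assumes fin: "finite B" and T: "0 \<le> T" and E: "finite E"
    and contG: "\<And>S R. S \<in> B \<Longrightarrow> R \<in> B \<Longrightarrow> continuous_on ({0..T} - E) (\<lambda>t. G t S R)"
    and intG: "(\<lambda>t. \<Sum>S\<in>B. G t S S) integrable_on {0..T}"
    and Mint: "\<And>t S R. t \<in> {0..T} \<Longrightarrow> S \<in> B \<Longrightarrow> R \<in> B \<Longrightarrow>
        ((\<lambda>s. \<Sum>K\<in>B. G s S K * M s K R) has_integral (M t S R - idop S R)) {0..t}"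
  shows "det_on B (M T) = exp (integral {0..T} (\<lambda>t. \<Sum>S\<in>B. G t S S))"
proof -
  define g where "g = (\<lambda>S R s. \<Sum>K\<in>B. G s S K * M s K R)"
  define tr where "tr = (\<lambda>t. \<Sum>S\<in>B. G t S S)"
  have gint: "g S R integrable_on {0..T}" if "S \<in> B" "R \<in> B" for S R
    using Mint[of T S R] that T unfolding g_def by (auto simp: has_integral_integrable)
  have Meq: "M t S R = idop S R + integral {0..t} (g S R)" if "t \<in> {0..T}" "S \<in> B" "R \<in> B" for t S R
    using integral_unique[OF Mint[OF that]] unfolding g_def by simp
  have Mcont: "continuous_on {0..T} (\<lambda>t. M t S R)" if "S \<in> B" "R \<in> B" for S R
  proof -
    have "continuous_on {0..T} (\<lambda>t. idop S R + integral {0..t} (g S R))"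
      by (intro continuous_intros indefinite_integral_continuous_1 gint that)
    thus ?thesis by (rule continuous_on_eq) (use Meq that in auto)
  qed
  have gcont: "continuous_on ({0..T} - E) (g S R)" if "S \<in> B" "R \<in> B" for S R
    unfolding g_def using that
    by (intro continuous_intros contG continuous_on_subset[OF Mcont]) auto
  have trcont: "continuous_on ({0..T} - E) tr"
    unfolding tr_def by (intro continuous_intros contG) auto
  define U where "U = {0<..<T} - E"
  have U: "open U" unfolding U_def using E by (intro open_Diff finite_imp_closed) auto
  have US: "U \<subseteq> {0..T} - E" unfolding U_def by auto
  have indef: "((\<lambda>t. integral {0..t} h) has_vector_derivative h x) (at x)"
    if "x \<in> U" "h integrable_on {0..T}" "continuous_on ({0..T} - E) h" for x and h :: "real \<Rightarrow> complex"
  proof -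
    have "((\<lambda>t. integral {0..t} h) has_vector_derivative h x) (at x within ({0..T} - E))"
      using that US E
      by (intro integral_has_vector_derivative_continuous_at)
         (auto simp: continuous_on_eq_continuous_within)
    hence "((\<lambda>t. integral {0..t} h) has_vector_derivative h x) (at x within U)"
      using US by (rule has_vector_derivative_within_subset)
    thus ?thesis by (simp only: has_vector_derivative_within_open[OF that(1) U])
  qed
  have Mder: "((\<lambda>t. M t S R) has_vector_derivative g S R x) (at x)" if "x \<in> U" "S \<in> B" "R \<in> B" for x S R
  proof -
    have "((\<lambda>t. idop S R + integral {0..t} (g S R)) has_vector_derivative g S R x) (at x)"
      using indef[OF that(1) gint[OF that(2,3)] gcont[OF that(2,3)]]
      by (intro derivative_eq_intros) auto
    thus ?thesis
      by (rule has_vector_derivative_transform_within_open[OF _ U that(1)])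
         (use Meq that US in auto)
  qed
  have detder: "((\<lambda>t. det_on B (M t)) has_vector_derivative (tr x * det_on B (M x))) (at x)"
    if x: "x \<in> U" for x
  proof -
    have "((\<lambda>t. det_on B (M t)) has_derivative
      (\<lambda>h. \<Sum>p | p permutes B. of_int (sign p) *
            (\<Sum>S0\<in>B. (h *\<^sub>R g S0 (p S0) x) * (\<Prod>S\<in>B - {S0}. M x S (p S))))) (at x)"
      unfolding det_on_def
    proof (intro has_derivative_sum has_derivative_mult_right has_derivative_prod)
      fix p S0 assume "p \<in> {p. p permutes B}" "S0 \<in> B"
      hence "p S0 \<in> B" by (simp add: permutes_in_image)
      thus "((\<lambda>t. M t S0 (p S0)) has_derivative (\<lambda>h. h *\<^sub>R g S0 (p S0) x)) (at x)"
        using Mder[OF x \<open>S0 \<in> B\<close>] unfolding has_vector_derivative_def by simp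
    qed
    hence "((\<lambda>t. det_on B (M t)) has_derivative (\<lambda>h. h *\<^sub>R (tr x * det_on B (M x)))) (at x)"
    proof (rule has_derivative_eq_rhs', intro ext)
      fix h :: real
      have "(\<Sum>p | p permutes B. of_int (sign p) *
            (\<Sum>S0\<in>B. (h *\<^sub>R g S0 (p S0) x) * (\<Prod>S\<in>B - {S0}. M x S (p S))))
          = of_real h * (\<Sum>p | p permutes B. of_int (sign p) *
            (\<Sum>S0\<in>B. (\<Prod>S\<in>B - {S0}. M x S (p S)) * (\<Sum>K\<in>B. G x S0 K * M x K (p S0))))"
        unfolding g_def scaleR_conv_of_real
        by (simp add: sum_distrib_left algebra_simps)
      also have "\<dots> = h *\<^sub>R (tr x * det_on B (M x))"
        unfolding det_on_deriv_identity[OF fin] tr_def scaleR_conv_of_real ..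
      finally show "(\<Sum>p | p permutes B. of_int (sign p) *
            (\<Sum>S0\<in>B. (h *\<^sub>R g S0 (p S0) x) * (\<Prod>S\<in>B - {S0}. M x S (p S))))
          = h *\<^sub>R (tr x * det_on B (M x))" .
    qed
    thus ?thesis unfolding has_vector_derivative_def .
  qed
  have trint: "tr integrable_on {0..T}" using intG unfolding tr_def .
  define f where "f = (\<lambda>t. det_on B (M t) * exp (- integral {0..t} tr))"
  have fder: "(f has_derivative (\<lambda>h. 0)) (at x within {0..T})" if x: "x \<in> {0..T} - (E \<union> {0, T})" for x
  proof -
    have xU: "x \<in> U" using x unfolding U_def by auto
    have e: "((\<lambda>t. exp (- integral {0..t} tr)) has_vector_derivative (- tr x) * exp (- integral {0..x} tr)) (at x)"
    proof -
      have "((\<lambda>t. - integral {0..t} tr) has_vector_derivative - tr x) (at x)"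
        using indef[OF xU trint trcont] by (rule has_vector_derivative_minus)
      from field_vector_diff_chain_within[OF this[unfolded has_vector_derivative_within_open[OF xU U, symmetric]] DERIV_exp[THEN has_field_derivative_at_within]]
      have "((exp \<circ> (\<lambda>t. - integral {0..t} tr)) has_vector_derivative (- tr x) * exp (- integral {0..x} tr)) (at x within U)" .
      thus ?thesis by (simp only: has_vector_derivative_within_open[OF xU U] o_def)
    qed
    have "(f has_vector_derivative (det_on B (M x) * ((- tr x) * exp (- integral {0..x} tr)) + (tr x * det_on B (M x)) * exp (- integral {0..x} tr))) (at x)"
      unfolding f_def by (rule has_vector_derivative_mult[OF detder[OF xU] e])
    hence "(f has_vector_derivative 0) (at x)" by (simp add: algebra_simps)
    hence "(f has_derivative (\<lambda>h. 0)) (at x)" unfolding has_vector_derivative_def by simp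
    thus ?thesis by (rule has_derivative_at_withinI)
  qed
  have fcont: "continuous_on {0..T} f"
    unfolding f_def det_on_def
    by (intro continuous_intros Mcont indefinite_integral_continuous_1 trint)
       (auto simp: permutes_in_image)
  have M0: "M 0 S R = idop S R" if "S \<in> B" "R \<in> B" for S R
    using Meq[of 0 S R] that T by simp
  have f0: "f 0 = 1"
    unfolding f_def using det_on_cong[of B "M 0" idop] M0 det_on_idop[OF fin] by simp
  have "f T = 1"
    by (rule has_derivative_zero_unique_strong_interval[of "E \<union> {0, T}" 0 T f]) (use E fcont f0 fder T in auto)
  hence "det_on B (M T) * exp (- integral {0..T} tr) * exp (integral {0..T} tr) = exp (integral {0..T} tr)"
    unfolding f_def by simp
  thus ?thesis unfolding tr_def by (simp add: exp_minus field_simps)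
qed



lemma sector_det:
  fixes Hx W :: "real \<Rightarrow> qop" and E :: "real set" and n m :: nat
  defines "B \<equiv> {S \<in> qbasis n. card S = m}"
  assumes T: "0 \<le> T" and E: "finite E"
   and blk: "\<And>t S R. t \<in> {0..T} \<Longrightarrow> S \<in> qbasis n \<Longrightarrow> R \<in> qbasis n \<Longrightarrow> card S \<noteq> card R \<Longrightarrow> Hx t S R = 0"
   and cont: "\<And>S R. S \<in> qbasis n \<Longrightarrow> R \<in> qbasis n \<Longrightarrow> continuous_on ({0..T} - E) (\<lambda>t. Hx t S R)"
   and dint: "\<And>S. S \<in> qbasis n \<Longrightarrow> (\<lambda>t. Hx t S S) integrable_on {0..T}"
   and prp: "propagator n T Hx W"
  shows "det_on B (W T) = exp (integral {0..T} (\<lambda>t. \<Sum>S\<in>B. - \<i> * Hx t S S))"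
proof (rule liouville[where G = "\<lambda>t S R. - \<i> * Hx t S R" and E = E])
  show "finite B" unfolding B_def by simp
  show "0 \<le> T" "finite E" by (fact T E)+
  show "continuous_on ({0..T} - E) (\<lambda>t. - \<i> * Hx t S R)" if "S \<in> B" "R \<in> B" for S R
    using that cont unfolding B_def by (intro continuous_intros) auto
  show "(\<lambda>t. \<Sum>S\<in>B. - \<i> * Hx t S S) integrable_on {0..T}"
    unfolding B_def by (intro integrable_sum integrable_on_mult_right dint) auto
  show "((\<lambda>s. \<Sum>K\<in>B. - \<i> * Hx s S K * W s K R) has_integral (W t S R - idop S R)) {0..t}"
    if t: "t \<in> {0..T}" and S: "S \<in> B" and R: "R \<in> B" for t S R
  proof -
    have I: "((\<lambda>s. - \<i> * mmul n (Hx s) (W s) S R) has_integral (W t S R - idop S R)) {0..t}"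
      using prp t S R unfolding propagator_def B_def by auto
    have eq: "- \<i> * mmul n (Hx s) (W s) S R = (\<Sum>K\<in>B. - \<i> * Hx s S K * W s K R)" if s: "s \<in> {0..t}" for s
    proof -
      have "mmul n (Hx s) (W s) S R = (\<Sum>K\<in>B. Hx s S K * W s K R)"
        unfolding mmul_def
      proof (rule sum.mono_neutral_right)
        show "\<forall>K\<in>qbasis n - B. Hx s S K * W s K R = 0"
        proof
          fix K assume K: "K \<in> qbasis n - B"
          hence "card K \<noteq> card S" using S unfolding B_def by auto
          thus "Hx s S K * W s K R = 0" using blk[of s S K] K S s t unfolding B_def by auto
        qed
      qed (auto simp: B_def)
      thus ?thesis by (simp add: sum_distrib_left mult.assoc)
    qed
    show ?thesis by (rule has_integral_eq[OF eq I])
  qed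
qed

lemma cong_2pi_Arg_exp: "\<exists>k::int. Arg (exp z) = Im z + 2 * pi * of_int k"
proof -
  obtain k::int where "Im z - of_int k * (2 * pi) = Arg (exp z)" using Arg_exp_diff_2pi by blast
  thus ?thesis by (intro exI[of _ "-k"]) (simp add: algebra_simps)
qed



definition cc :: "nat \<Rightarrow> nat set \<Rightarrow> nat \<Rightarrow> real" where
  "cc n I m = (\<Sum>S\<in>{S\<in>qbasis n. card S = m}. (-1) ^ card (S \<inter> I))"

lemma sec0: "{S\<in>qbasis n. card S = 0} = {{}}"
proof -
  have "S = {}" if "S \<subseteq> {1..n}" "card S = 0" for S
    using that finite_subset[OF that(1)] by simp
  thus ?thesis by (auto simp: qbasis_def)
qed

lemma secn: "{S\<in>qbasis n. card S = n} = {{1..n}}"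
proof -
  have "S = {1..n}" if "S \<subseteq> {1..n}" "card S = n" for S
    using that card_subset_eq[OF _ that(1)] by simp
  thus ?thesis by (auto simp: qbasis_def)
qed

lemma sec1: "{S\<in>qbasis n. card S = 1} = (\<lambda>j. {j}) ` {1..n}"
proof -
  have "S \<in> (\<lambda>j. {j}) ` {1..n}" if h: "S \<subseteq> {1..n}" "card S = 1" for S
  proof -
    obtain j where "S = {j}" using h(2) card_1_singletonE by blast
    thus ?thesis using h(1) by auto
  qed
  thus ?thesis by (auto simp: qbasis_def)
qed

lemma secn1:
  assumes "n \<ge> 1"
  shows "{S\<in>qbasis n. card S = n - 1} = (\<lambda>j. {1..n} - {j}) ` {1..n}"
proof
  show "(\<lambda>j. {1..n} - {j}) ` {1..n} \<subseteq> {S\<in>qbasis n. card S = n - 1}"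
    by (auto simp: qbasis_def)
  show "{S\<in>qbasis n. card S = n - 1} \<subseteq> (\<lambda>j. {1..n} - {j}) ` {1..n}"
  proof
    fix S assume S: "S \<in> {S\<in>qbasis n. card S = n - 1}"
    hence sub: "S \<subseteq> {1..n}" and c: "card S = n - 1" by (auto simp: qbasis_def)
    have "card ({1..n} - S) = 1" using sub c assms by (simp add: card_Diff_subset finite_subset)
    then obtain j where j: "{1..n} - S = {j}" by (auto simp: card_1_singleton_iff)
    hence "j \<in> {1..n}" "S = {1..n} - {j}" using sub by auto
    thus "S \<in> (\<lambda>j. {1..n} - {j}) ` {1..n}" by blast
  qed
qed

lemma cc0: "cc n I 0 = 1" unfolding cc_def sec0 by simp

lemma ccn: "I \<subseteq> {1..n} \<Longrightarrow> cc n I n = (-1) ^ card I"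
  unfolding cc_def secn by (simp add: Int_absorb1)

lemma cc1:
  assumes "I \<subseteq> {1..n}"
  shows "cc n I 1 = real n - 2 * real (card I)"
proof -
  have "cc n I 1 = (\<Sum>j\<in>{1..n}. (-1) ^ card ({j} \<inter> I))"
    unfolding cc_def sec1 by (subst sum.reindex) (auto simp: inj_on_def)
  also have "\<dots> = (\<Sum>j\<in>{1..n}. if j \<in> I then -1 else 1)"
    by (intro sum.cong) auto
  also have "\<dots> = - real (card I) + real (card ({1..n} - I))"
  proof -
    have "{1..n} \<inter> - I = {1..n} - I" "{1..n} \<inter> I = I" using assms by auto
    thus ?thesis using assms by (simp add: sum.If_cases Int_absorb2)
  qed
  also have "\<dots> = real n - 2 * real (card I)"
  proof -
    have "card I \<le> n" using card_mono[OF _ assms] by simp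
    thus ?thesis using assms by (simp add: card_Diff_subset finite_subset of_nat_diff)
  qed
  finally show ?thesis .
qed

lemma ccn1:
  assumes "I \<subseteq> {1..n}" "n \<ge> 1"
  shows "cc n I (n - 1) = (-1) ^ card I * (real n - 2 * real (card I))"
proof -
  have fI: "finite I" using assms(1) finite_subset by blast
  have "cc n I (n - 1) = (\<Sum>j\<in>{1..n}. (-1) ^ card (({1..n} - {j}) \<inter> I))"
    unfolding cc_def secn1[OF assms(2)] by (subst sum.reindex) (auto simp: inj_on_def)
  also have "\<dots> = (\<Sum>j\<in>{1..n}. (-1) ^ card I * (if j \<in> I then -1 else 1))"
  proof (intro sum.cong refl)
    fix j assume j: "j \<in> {1..n}"
    have eq: "({1..n} - {j}) \<inter> I = I - {j}" using assms(1) by auto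
    show "(-1::real) ^ card (({1..n} - {j}) \<inter> I) = (-1) ^ card I * (if j \<in> I then -1 else 1)"
    proof (cases "j \<in> I")
      case True
      define c where "c = card (I - {j})"
      have "card I = Suc c" using fI True unfolding c_def by (metis card_Suc_Diff1)
      thus ?thesis unfolding eq c_def[symmetric] using True by simp
    next
      case False thus ?thesis unfolding eq by simp
    qed
  qed
  also have "\<dots> = (-1) ^ card I * (\<Sum>j\<in>{1..n}. if j \<in> I then -1 else 1)"
    by (simp add: sum_distrib_left)
  also have "(\<Sum>j\<in>{1..n}. if j \<in> I then -1 else 1) = cc n I 1"
    unfolding cc_def sec1 by (subst sum.reindex) (auto simp: inj_on_def intro!: sum.cong)
  finally show ?thesis using cc1[OF assms(1)] by simp
qed



theorem mainTheorem4:
  fixes n k :: nat and T :: real and H V V' :: "real \<Rightarrow> qop"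
    and qs :: "nat list" and a :: "real \<Rightarrow> real"
  assumes "n \<ge> 2" and "0 \<le> T"
    and "\<forall>t\<in>{0..T}. hermitian_op n (H t)"
    and "\<forall>t\<in>{0..T}. U1_invariant n (H t)"
    and "pw_continuous_ham n T H"
    and "1 \<le> k" and "k \<le> n" and "length qs = k" and "distinct qs" and "set qs \<subseteq> {1..n}"
    and "pw_continuous_on 0 T a"
    and "propagator n T H V"
    and "propagator n T (\<lambda>t S R. H t S R + complex_of_real (a t) * Zprod n qs S R) V'"
  shows "(even k \<longrightarrow> cong_2pi (Delta3 n (V' T)) (Delta3 n (V T))) \<and>
         (odd k \<longrightarrow> cong_2pi (Delta3 n (V' T))
                      (Delta3 n (V T) - 4 * (real k - 1) * integral {0..T} a))"
proof -
  note n = assms(1) and T = assms(2) and U1 = assms(4) and pwH = assms(5)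
  note kk = assms(6-10) and pwa = assms(11) and pV = assms(12) and pV' = assms(13)
  define I where "I = set qs"
  have cardI: "card I = k" using kk unfolding I_def by (simp add: distinct_card)
  have Isub: "I \<subseteq> {1..n}" using kk unfolding I_def by simp
  define Dsel where "Dsel = (\<lambda>S R. SOME D. finite D \<and> continuous_on ({0..T} - D) (\<lambda>t. H t S R))"
  have Dsel: "finite (Dsel S R) \<and> continuous_on ({0..T} - Dsel S R) (\<lambda>t. H t S R)"
    if "S \<in> qbasis n" "R \<in> qbasis n" for S R
  proof -
    have "\<exists>D. finite D \<and> continuous_on ({0..T} - D) (\<lambda>t. H t S R)"
    proof -
      have "pw_continuous_on 0 T (\<lambda>t. H t S R)" using pwH that unfolding pw_continuous_ham_def by simp
      then obtain D where "finite D" "continuous_on ({0..T} - D) (\<lambda>t. H t S R)"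
        unfolding pw_continuous_on_def by blast
      thus ?thesis by blast
    qed
    thus ?thesis unfolding Dsel_def by (rule someI_ex)
  qed
  obtain Da where Da: "finite Da" "continuous_on ({0..T} - Da) a"
    using pwa unfolding pw_continuous_on_def by blast
  define E where "E = (\<Union>S\<in>qbasis n. \<Union>R\<in>qbasis n. Dsel S R) \<union> Da"
  have E: "finite E" unfolding E_def
    by (intro finite_UnI finite_UN_I finite_qbasis Da(1)) (use Dsel in blast)
  have Hcont: "continuous_on ({0..T} - E) (\<lambda>t. H t S R)" if "S \<in> qbasis n" "R \<in> qbasis n" for S R
  proof -
    have "continuous_on ({0..T} - Dsel S R) (\<lambda>t. H t S R)" using Dsel[OF that] by blast
    moreover have "{0..T} - E \<subseteq> {0..T} - Dsel S R" using that unfolding E_def by blast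
    ultimately show ?thesis by (rule continuous_on_subset)
  qed
  have acont: "continuous_on ({0..T} - E) a"
    by (rule continuous_on_subset[OF Da(2)]) (auto simp: E_def)
  have Hint: "(\<lambda>t. H t S R) integrable_on {0..T}" if "S \<in> qbasis n" "R \<in> qbasis n" for S R
    by (intro pw_integrable) (use pwH that in \<open>simp add: pw_continuous_ham_def\<close>)
  have aint: "a integrable_on {0..T}" using pwa by (rule pw_integrable)
  define A where "A = integral {0..T} a"
  have aI: "(a has_integral A) {0..T}" unfolding A_def using aint by (rule integrable_integral)
  have aI': "((\<lambda>t. c * complex_of_real (a t)) has_integral (c * of_real A)) {0..T}" for c
    by (intro has_integral_mult_right has_integral_of_real aI)
  define H' where "H' = (\<lambda>t S R. H t S R + complex_of_real (a t) * Zprod n qs S R)"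
  define B where "B = (\<lambda>m. {S \<in> qbasis n. card S = m})"
  define Z where "Z = (\<lambda>m. integral {0..T} (\<lambda>t. \<Sum>S\<in>B m. - \<i> * H t S S))"
  have detV: "det_on (B m) (V T) = exp (Z m)" for m
    unfolding B_def Z_def
  proof (rule sector_det[OF T E _ Hcont _ pV])
    show "H t S R = 0" if "t \<in> {0..T}" "S \<in> qbasis n" "R \<in> qbasis n" "card S \<noteq> card R" for t S R
      using U1_block[of n "H t" S R] U1 that by auto
  qed (auto intro: Hint)
  have detV': "det_on (B m) (V' T) = exp (integral {0..T} (\<lambda>t. \<Sum>S\<in>B m. - \<i> * H' t S S))" for m
    unfolding B_def
  proof (rule sector_det[OF T E, where Hx = H' and W = V'])
    show "propagator n T H' V'" using pV' unfolding H'_def .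
    show "H' t S R = 0" if "t \<in> {0..T}" "S \<in> qbasis n" "R \<in> qbasis n" "card S \<noteq> card R" for t S R
    proof -
      have "S \<noteq> R" using that by auto
      thus ?thesis unfolding H'_def using U1_block[of n "H t" S R] U1 that Zprod_diag[OF that(2)] by auto
    qed
    show "continuous_on ({0..T} - E) (\<lambda>t. H' t S R)" if "S \<in> qbasis n" "R \<in> qbasis n" for S R
      unfolding H'_def by (intro continuous_intros Hcont that acont)
    show "(\<lambda>t. H' t S S) integrable_on {0..T}" if "S \<in> qbasis n" for S
      unfolding H'_def
      by (intro integrable_add Hint that integrable_on_mult_left) (use aint has_integral_of_real in \<open>auto simp: integrable_on_def\<close>)
  qed
  have Z': "integral {0..T} (\<lambda>t. \<Sum>S\<in>B m. - \<i> * H' t S S) = Z m + (- \<i> * of_real (cc n I m)) * of_real A" for m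
  proof -
    have eq: "(\<Sum>S\<in>B m. - \<i> * H' t S S) = (\<Sum>S\<in>B m. - \<i> * H t S S) + (- \<i> * of_real (cc n I m)) * of_real (a t)" for t
    proof -
      have "(\<Sum>S\<in>B m. Zprod n qs S S) = of_real (cc n I m)"
        unfolding cc_def B_def I_def using kk
        by (simp add: Zprod_diag')
      moreover have "(\<Sum>S\<in>B m. - \<i> * H' t S S) = (\<Sum>S\<in>B m. - \<i> * H t S S) + (- \<i> * of_real (a t)) * (\<Sum>S\<in>B m. Zprod n qs S S)"
        unfolding H'_def distrib_left sum.distrib sum_distrib_left by (simp only: mult.assoc)
      ultimately show ?thesis by (simp only: mult_ac)
    qed
    have "((\<lambda>t. \<Sum>S\<in>B m. - \<i> * H' t S S) has_integral (Z m + (- \<i> * of_real (cc n I m)) * of_real A)) {0..T}"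
      unfolding eq Z_def
      by (intro has_integral_add aI' integrable_integral integrable_sum integrable_on_mult_right Hint) (auto simp: B_def)
    thus ?thesis by (rule integral_unique)
  qed
  have d: "\<exists>j::int. theta n (V' T) m - theta n (V T) m = - cc n I m * A + 2 * pi * of_int j" for m
  proof -
    obtain k1::int where k1: "Arg (exp (Z m)) = Im (Z m) + 2 * pi * of_int k1" using cong_2pi_Arg_exp by blast
    obtain k2::int where k2: "Arg (exp (Z m + (- \<i> * of_real (cc n I m)) * of_real A)) =
       Im (Z m + (- \<i> * of_real (cc n I m)) * of_real A) + 2 * pi * of_int k2" using cong_2pi_Arg_exp by blast
    have t1: "theta n (V T) m = Im (Z m) + 2 * pi * of_int k1"
      using detV[of m] k1 unfolding theta_def B_def by simp
    have t2: "theta n (V' T) m = Im (Z m) - cc n I m * A + 2 * pi * of_int k2"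
      using detV'[of m] Z'[of m] k2 unfolding theta_def B_def by simp
    have "theta n (V' T) m - theta n (V T) m = - cc n I m * A + 2 * pi * of_int (k2 - k1)"
      unfolding t1 t2 by (simp add: algebra_simps)
    thus ?thesis by blast
  qed
  obtain j where j: "\<And>m. theta n (V' T) m - theta n (V T) m = - cc n I m * A + 2 * pi * of_int (j m)"
    using d by metis
  define X where "X = cc n I (n - 1) - cc n I 1 - (real n - 2) * (cc n I n - cc n I 0)"
  have n2: "real n - 2 = of_int (int n - 2)" using n by simp
  have main: "cong_2pi (Delta3 n (V' T)) (Delta3 n (V T) - X * A)"
    unfolding cong_2pi_def
  proof (intro exI[of _ "j (n - 1) - j 1 - (int n - 2) * (j n - j 0)"])
    have "Delta3 n (V' T) - (Delta3 n (V T) - X * A) =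
      (theta n (V' T) (n - 1) - theta n (V T) (n - 1)) - (theta n (V' T) 1 - theta n (V T) 1)
       - (real n - 2) * ((theta n (V' T) n - theta n (V T) n) - (theta n (V' T) 0 - theta n (V T) 0)) + X * A"
      unfolding Delta3_def by (simp add: algebra_simps)
    also have "\<dots> = 2 * pi * of_int (j (n - 1) - j 1 - (int n - 2) * (j n - j 0))"
      unfolding j X_def n2 by (simp add: algebra_simps)
    finally show "Delta3 n (V' T) - (Delta3 n (V T) - X * A) = 2 * pi * of_int (j (n - 1) - j 1 - (int n - 2) * (j n - j 0))" .
  qed
  have n1: "n \<ge> 1" using n by simp
  have X: "X = (if even k then 0 else 4 * (real k - 1))"
    using n unfolding X_def ccn1[OF Isub n1] cc1[OF Isub] ccn[OF Isub] cc0 cardI using n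
    by (cases "even k") (auto simp: algebra_simps)
  show ?thesis using main X unfolding A_def by (auto simp: mult.commute)
qed

end
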